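(* For any graph $G$ on $n\ge1$ vertices and any $\lambda>0$, \[ \frac{\alpha(G)}{\overline\alpha_G(\lambda)}\;\ge\;1+\frac{\alpha(G)}{\lambda n}, \] or equivalently $P_G(\lambda)\ge\left(\frac{\lambda}{\alpha(G)}+\frac1n\right)P_G'(\lambda)$. Equality holds when $G$ is a disjoint union of copies of $K_r$, for any $r\ge1$.
   Context: $\alpha(G)$ is the maximum size of an independent set of $G$. $P_G(\lambda)=\sum_J\lambda^{|J|}$ over all independent sets $J$ of $G$ (including the empty set), and $\overline\alpha_G(\lambda)=\lambda P_G'(\lambda)/P_G(\lambda)$ is the expected size of an independent set drawn from the hard-core model $\Pr[J]=\lambda^{|J|}/P_G(\lambda)$. $K_r$ is the complete graph on $r$ vertices. *)

theory Defs
  imports "HOL-Analysis.Analysis"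
begin

definition graph :: "'a set \<Rightarrow> ('a \<Rightarrow> 'a \<Rightarrow> bool) \<Rightarrow> bool" where
  "graph V E \<longleftrightarrow> finite V \<and> (\<forall>x y. E x y \<longrightarrow> E y x) \<and> (\<forall>x. \<not> E x x)
     \<and> (\<forall>x y. E x y \<longrightarrow> x \<in> V \<and> y \<in> V)"

definition indep_set :: "'a set \<Rightarrow> ('a \<Rightarrow> 'a \<Rightarrow> bool) \<Rightarrow> 'a set \<Rightarrow> bool" where
  "indep_set V E J \<longleftrightarrow> J \<subseteq> V \<and> (\<forall>x\<in>J. \<forall>y\<in>J. \<not> E x y)"

definition indep_num :: "'a set \<Rightarrow> ('a \<Rightarrow> 'a \<Rightarrow> bool) \<Rightarrow> nat" where
  "indep_num V E = Max (card ` {J. indep_set V E J})"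

definition indep_poly :: "'a set \<Rightarrow> ('a \<Rightarrow> 'a \<Rightarrow> bool) \<Rightarrow> real \<Rightarrow> real" where
  "indep_poly V E lam = (\<Sum>J\<in>{J. indep_set V E J}. lam ^ card J)"

text \<open>Expected size of a hard-core independent set: lambda P_G'(lambda) / P_G(lambda).\<close>
definition avg_indep :: "'a set \<Rightarrow> ('a \<Rightarrow> 'a \<Rightarrow> bool) \<Rightarrow> real \<Rightarrow> real" where
  "avg_indep V E lam = lam * deriv (indep_poly V E) lam / indep_poly V E lam"

end

theory Submission
  imports Defs
begin


definition Ik :: "'a set \<Rightarrow> ('a \<Rightarrow> 'a \<Rightarrow> bool) \<Rightarrow> nat \<Rightarrow> 'a set set" where
  "Ik V E k = {J. indep_set V E J \<and> card J = k}"
definition Xs :: "'a set \<Rightarrow> ('a \<Rightarrow> 'a \<Rightarrow> bool) \<Rightarrow> 'a set \<Rightarrow> 'a set" where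
  "Xs V E J = {v\<in>V. v \<notin> J \<and> (\<forall>u\<in>J. \<not> E u v)}"

lemma fin_indep: "graph V E \<Longrightarrow> finite {J. indep_set V E J}"
  by (rule finite_subset[of _ "Pow V"]) (auto simp: graph_def indep_set_def)

lemma fin_Ik: "graph V E \<Longrightarrow> finite (Ik V E k)"
  by (rule finite_subset[OF _ fin_indep]) (auto simp: Ik_def)

lemma fin_Xs: "graph V E \<Longrightarrow> finite (Xs V E J)"
  by (auto simp: graph_def Xs_def)

lemma indep_fin: "graph V E \<Longrightarrow> indep_set V E J \<Longrightarrow> finite J"
  by (auto simp: graph_def indep_set_def intro: finite_subset)

lemma indep_ins: "graph V E \<Longrightarrow> indep_set V E J \<Longrightarrow> v \<in> Xs V E J \<Longrightarrow> indep_set V E (insert v J)"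
  unfolding graph_def indep_set_def Xs_def by blast

lemma indep_del: "indep_set V E I \<Longrightarrow> indep_set V E (I - {u})"
  unfolding indep_set_def by blast

lemma in_Xs_del: "indep_set V E I \<Longrightarrow> u \<in> I \<Longrightarrow> u \<in> Xs V E (I - {u})"
  unfolding indep_set_def Xs_def by blast

lemma dc:
  assumes g: "graph V E"
  shows "(\<Sum>J\<in>Ik V E k. \<Sum>v\<in>Xs V E J. f J v) = (\<Sum>I\<in>Ik V E (Suc k). \<Sum>u\<in>I. f (I - {u}) u)"
proof -
  have "(\<Sum>J\<in>Ik V E k. \<Sum>v\<in>Xs V E J. f J v) = sum (\<lambda>(J,v). f J v) (SIGMA J:Ik V E k. Xs V E J)"
    by (rule sum.Sigma) (auto simp: fin_Ik[OF g] fin_Xs[OF g])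
  also have "\<dots> = sum (\<lambda>(I,u). f (I - {u}) u) (SIGMA I:Ik V E (Suc k). I)"
  proof (rule sum.reindex_bij_witness[where i="\<lambda>(I,u). (I - {u}, u)" and j="\<lambda>(J,v). (insert v J, v)"])
    fix a assume "a \<in> (SIGMA J:Ik V E k. Xs V E J)"
    then obtain J v where a: "a = (J,v)" "J \<in> Ik V E k" "v \<in> Xs V E J" by blast
    then have vJ: "v \<notin> J" by (auto simp: Xs_def)
    have fJ: "finite J" using a indep_fin[OF g] by (auto simp: Ik_def)
    show "(case case a of (J, v) \<Rightarrow> (insert v J, v) of (I, u) \<Rightarrow> (I - {u}, u)) = a"
      using a vJ by auto
    show "(case a of (J, v) \<Rightarrow> (insert v J, v)) \<in> (SIGMA I:Ik V E (Suc k). I)"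
      using a vJ fJ indep_ins[OF g] by (auto simp: Ik_def)
    show "(case case a of (J, v) \<Rightarrow> (insert v J, v) of (I, u) \<Rightarrow> f (I - {u}) u) = (case a of (J, v) \<Rightarrow> f J v)"
      using a vJ by auto
  next
    fix b assume "b \<in> (SIGMA I:Ik V E (Suc k). I)"
    then obtain I u where b: "b = (I,u)" "I \<in> Ik V E (Suc k)" "u \<in> I" by blast
    have fI: "finite I" using b indep_fin[OF g] by (auto simp: Ik_def)
    show "(case case b of (I, u) \<Rightarrow> (I - {u}, u) of (J, v) \<Rightarrow> (insert v J, v)) = b"
      using b by auto
    show "(case b of (I, u) \<Rightarrow> (I - {u}, u)) \<in> (SIGMA J:Ik V E k. Xs V E J)"
      using b fI indep_del in_Xs_del by (auto simp: Ik_def)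
  qed
  also have "\<dots> = (\<Sum>I\<in>Ik V E (Suc k). \<Sum>u\<in>I. f (I - {u}) u)"
    using fin_Ik[OF g, of "Suc k"] by (intro sum.Sigma[symmetric]) (auto simp: Ik_def indep_fin[OF g])
  finally show ?thesis .
qed

lemma count1:
  assumes g: "graph V E"
  shows "real (Suc k) * real (card (Ik V E (Suc k))) = (\<Sum>J\<in>Ik V E k. real (card (Xs V E J)))"
proof -
  have "(\<Sum>J\<in>Ik V E k. \<Sum>v\<in>Xs V E J. (1::real)) = (\<Sum>I\<in>Ik V E (Suc k). \<Sum>u\<in>I. (1::real))"
    using dc[OF g, where k=k and f="\<lambda>_ _. 1::real"] .
  also have "\<dots> = (\<Sum>I\<in>Ik V E (Suc k). real (Suc k))"
    by (rule sum.cong) (auto simp: Ik_def)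
  finally show ?thesis by (simp add: mult.commute)
qed

lemma count2:
  assumes g: "graph V E"
  shows "(\<Sum>J\<in>Ik V E k. real (card (Xs V E J)) ^ 2) = (\<Sum>I\<in>Ik V E (Suc k). \<Sum>u\<in>I. real (card (Xs V E (I - {u}))))"
proof -
  have "(\<Sum>J\<in>Ik V E k. \<Sum>v\<in>Xs V E J. real (card (Xs V E J))) = (\<Sum>I\<in>Ik V E (Suc k). \<Sum>u\<in>I. real (card (Xs V E (I - {u}))))"
    using dc[OF g, where k=k and f="\<lambda>J _. real (card (Xs V E J))"] .
  then show ?thesis by (simp add: power2_eq_square)
qed

lemma priv:
  assumes g: "graph V E" and I: "indep_set V E I" and cI: "card I = Suc k"
  shows "(\<Sum>u\<in>I. real (card (Xs V E (I - {u})))) \<le> real (card V) + real k * real (card (Xs V E I))"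
proof -
  define D where "D u = Xs V E (I - {u}) - Xs V E I" for u
  have fV: "finite V" using g by (simp add: graph_def)
  have fI: "finite I" using indep_fin[OF g I] .
  have sub: "Xs V E I \<subseteq> Xs V E (I - {u})" for u by (auto simp: Xs_def)
  have eq: "card (Xs V E (I - {u})) = card (Xs V E I) + card (D u)" for u
  proof -
    have "Xs V E (I - {u}) = Xs V E I \<union> D u" using sub[of u] by (auto simp: D_def)
    moreover have "finite (Xs V E (I - {u}))" using fin_Xs[OF g] .
    ultimately show ?thesis unfolding D_def
      by (metis card_Diff_subset card_mono diff_add_inverse sub le_add_diff_inverse finite_subset)
  qed
  have disj: "\<forall>u\<in>I. \<forall>u'\<in>I. u \<noteq> u' \<longrightarrow> D u \<inter> D u' = {}"
    unfolding D_def Xs_def by blast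
  have fD: "\<forall>u\<in>I. finite (D u)" using fin_Xs[OF g] by (auto simp: D_def)
  have cU: "card (\<Union>(D ` I)) = (\<Sum>u\<in>I. card (D u))"
    using card_UN_disjoint[OF fI fD disj] .
  have "\<Union>(D ` I) \<subseteq> V - Xs V E I" by (auto simp: D_def Xs_def)
  then have "card (\<Union>(D ` I)) \<le> card (V - Xs V E I)" using fV by (intro card_mono) auto
  also have "\<dots> = card V - card (Xs V E I)"
    using fV by (intro card_Diff_subset) (auto simp: Xs_def intro: finite_subset)
  finally have le: "(\<Sum>u\<in>I. card (D u)) \<le> card V - card (Xs V E I)" using cU by simp
  have XV: "card (Xs V E I) \<le> card V" using fV by (intro card_mono) (auto simp: Xs_def)
  have "(\<Sum>u\<in>I. card (Xs V E (I - {u}))) = (\<Sum>u\<in>I. card (Xs V E I) + card (D u))"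
    using eq by simp
  also have "\<dots> = Suc k * card (Xs V E I) + (\<Sum>u\<in>I. card (D u))"
    by (simp add: sum.distrib cI)
  also have "\<dots> \<le> card V + k * card (Xs V E I)" using le XV by simp
  finally have "(\<Sum>u\<in>I. card (Xs V E (I - {u}))) \<le> card V + k * card (Xs V E I)" .
  then have "real (\<Sum>u\<in>I. card (Xs V E (I - {u}))) \<le> real (card V + k * card (Xs V E I))"
    by (simp only: of_nat_le_iff)
  then show ?thesis by simp
qed

lemma recur:
  assumes g: "graph V E"
  shows "(real (Suc k) * real (card (Ik V E (Suc k))))^2 \<le> real (card (Ik V E k)) *
     (real (card V) * real (card (Ik V E (Suc k))) + real k * (real (Suc (Suc k)) * real (card (Ik V E (Suc (Suc k))))))"
proof -
  let ?m = "\<lambda>J. real (card (Xs V E J))"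
  have h1: "(real (Suc k) * real (card (Ik V E (Suc k))))^2 \<le> (\<Sum>J\<in>Ik V E k. (?m J)^2) * real (card (Ik V E k))"
    using count1[OF g, of k] sum_squared_le_sum_of_squares[of ?m "Ik V E k"] by simp
  have "(\<Sum>J\<in>Ik V E k. (?m J)^2) = (\<Sum>I\<in>Ik V E (Suc k). \<Sum>u\<in>I. ?m (I - {u}))"
    using count2[OF g] .
  also have "\<dots> \<le> (\<Sum>I\<in>Ik V E (Suc k). real (card V) + real k * ?m I)"
    by (rule sum_mono) (use priv[OF g] in \<open>auto simp: Ik_def\<close>)
  also have "\<dots> = real (card V) * real (card (Ik V E (Suc k))) + real k * (\<Sum>I\<in>Ik V E (Suc k). ?m I)"
    by (simp add: sum.distrib sum_distrib_left)
  also have "(\<Sum>I\<in>Ik V E (Suc k). ?m I) = real (Suc (Suc k)) * real (card (Ik V E (Suc (Suc k))))"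
    using count1[OF g, of "Suc k"] by simp
  finally have h2: "(\<Sum>J\<in>Ik V E k. (?m J)^2) \<le> real (card V) * real (card (Ik V E (Suc k))) + real k * (real (Suc (Suc k)) * real (card (Ik V E (Suc (Suc k)))))" .
  show ?thesis using order_trans[OF h1 mult_right_mono[OF h2, of "real (card (Ik V E k))"]]
    by (simp add: mult.commute)
qed

lemma alg:
  fixes a b c n k A :: real
  assumes "a \<ge> 0" "b \<ge> 0" "c \<ge> 0" "n \<ge> 0" "k \<ge> 0" "A \<ge> k + 1"
    and r: "((k+1) * b)^2 \<le> a * (n * b + k * ((k+2) * c))"
    and ih: "A * (k+2) * c \<le> n * (A - (k+1)) * b"
  shows "A * (k+1) * b \<le> n * (A - k) * a"
proof (cases "b = 0")
  case True then show ?thesis using assms by simp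
next
  case False
  then have bp: "b > 0" using assms by simp
  have "A * ((k+1) * b)^2 \<le> A * (a * (n * b + k * ((k+2) * c)))"
    using r assms by (intro mult_left_mono) auto
  also have "\<dots> = a * (A * n * b + k * (A * (k+2) * c))" by (simp add: algebra_simps)
  also have "\<dots> \<le> a * (A * n * b + k * (n * (A - (k+1)) * b))"
    using ih assms by (intro mult_left_mono add_left_mono) auto
  also have "\<dots> = ((k+1) * b) * (n * (A - k) * a)" by (simp add: algebra_simps)
  finally have "((k+1) * b) * (A * (k+1) * b) \<le> ((k+1) * b) * (n * (A - k) * a)"
    by (simp add: power2_eq_square algebra_simps)
  moreover have "(k+1) * b > 0" using bp assms by simp
  ultimately show ?thesis by (meson mult_le_cancel_left_pos)
qed

lemma alpha_ge: "graph V E \<Longrightarrow> indep_set V E J \<Longrightarrow> card J \<le> indep_num V E"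
  unfolding indep_num_def using fin_indep by (intro Max_ge) auto

lemma alpha_ex: "graph V E \<Longrightarrow> \<exists>J. indep_set V E J \<and> card J = indep_num V E"
proof -
  assume g: "graph V E"
  have "{} \<in> {J. indep_set V E J}" by (simp add: indep_set_def)
  then have "indep_num V E \<in> card ` {J. indep_set V E J}"
    unfolding indep_num_def using fin_indep[OF g] by (intro Max_in) auto
  then show ?thesis by auto
qed

lemma Ik_big: "graph V E \<Longrightarrow> indep_num V E < k \<Longrightarrow> Ik V E k = {}"
  using alpha_ge by (fastforce simp: Ik_def)

lemma alpha_pos: "graph V E \<Longrightarrow> V \<noteq> {} \<Longrightarrow> indep_num V E \<ge> 1"
proof -
  assume g: "graph V E" and "V \<noteq> {}"
  then obtain v where v: "v \<in> V" by auto
  have "indep_set V E {v}" using g v by (simp add: indep_set_def graph_def)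
  from alpha_ge[OF g this] show ?thesis by simp
qed

lemma Tk:
  assumes g: "graph V E"
  shows "k \<le> indep_num V E \<Longrightarrow> real (indep_num V E) * real (Suc k) * real (card (Ik V E (Suc k)))
     \<le> real (card V) * (real (indep_num V E) - real k) * real (card (Ik V E k))"
proof (induction "indep_num V E - k" arbitrary: k)
  case 0
  then have "k = indep_num V E" by simp
  then have "Ik V E (Suc k) = {}" using Ik_big[OF g] by simp
  then show ?case using 0 by simp
next
  case (Suc j)
  then have kl: "Suc k \<le> indep_num V E" by simp
  have ih: "real (indep_num V E) * real (Suc (Suc k)) * real (card (Ik V E (Suc (Suc k))))
     \<le> real (card V) * (real (indep_num V E) - real (Suc k)) * real (card (Ik V E (Suc k)))"
    using Suc.hyps(1)[of "Suc k"] Suc.hyps(2) kl by (simp del: of_nat_Suc)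
  have r: "(real (Suc k) * real (card (Ik V E (Suc k))))^2 \<le> real (card (Ik V E k)) *
     (real (card V) * real (card (Ik V E (Suc k))) + real k * (real (Suc (Suc k)) * real (card (Ik V E (Suc (Suc k))))))"
    using recur[OF g] .
  have "real (indep_num V E) \<ge> real k + 1" using kl by simp
  from alg[OF _ _ _ _ _ this, of "real (card (Ik V E k))" "real (card (Ik V E (Suc k)))" "real (card (Ik V E (Suc (Suc k))))" "real (card V)"]
  show ?case using r ih by (simp add: add.commute)
qed

lemma poly_eq:
  assumes g: "graph V E"
  shows "indep_poly V E = (\<lambda>x. \<Sum>k\<le>indep_num V E. real (card (Ik V E k)) * x ^ k)"
proof
  fix x :: real
  have "indep_poly V E x = (\<Sum>J\<in>{J. indep_set V E J}. x ^ card J)" by (simp add: indep_poly_def)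
  also have "\<dots> = (\<Sum>k\<le>indep_num V E. \<Sum>J\<in>{J. J \<in> {J. indep_set V E J} \<and> card J = k}. x ^ card J)"
    by (rule sum.group[symmetric]) (use fin_indep[OF g] alpha_ge[OF g] in auto)
  also have "\<dots> = (\<Sum>k\<le>indep_num V E. real (card (Ik V E k)) * x ^ k)"
  proof (rule sum.cong)
    fix k assume "k \<in> {..indep_num V E}"
    have "(\<Sum>J\<in>{J. J \<in> {J. indep_set V E J} \<and> card J = k}. x ^ card J) = (\<Sum>J\<in>Ik V E k. x ^ k)"
      by (rule sum.cong) (auto simp: Ik_def)
    then show "(\<Sum>J\<in>{J. J \<in> {J. indep_set V E J} \<and> card J = k}. x ^ card J) = real (card (Ik V E k)) * x ^ k"
      by simp
  qed simp
  finally show "indep_poly V E x = (\<Sum>k\<le>indep_num V E. real (card (Ik V E k)) * x ^ k)" .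
qed

lemma deriv_eq:
  assumes g: "graph V E"
  shows "deriv (indep_poly V E) x = (\<Sum>k\<le>indep_num V E. real (card (Ik V E k)) * (real k * x ^ (k - Suc 0)))"
  unfolding poly_eq[OF g]
  by (rule DERIV_imp_deriv) (intro DERIV_sum DERIV_cmult DERIV_pow)

lemma deriv_shift:
  assumes g: "graph V E"
  shows "(\<Sum>k\<le>indep_num V E. real (card (Ik V E k)) * (real k * x ^ (k - Suc 0)))
     = (\<Sum>k\<le>indep_num V E. real (Suc k) * real (card (Ik V E (Suc k))) * x ^ k)"
proof -
  let ?g = "\<lambda>j. real (card (Ik V E j)) * (real j * x ^ (j - Suc 0))"
  have "(\<Sum>i\<le>Suc (indep_num V E). ?g i) = ?g 0 + (\<Sum>i\<le>indep_num V E. ?g (Suc i))"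
    by (rule sum.atMost_Suc_shift)
  moreover have "(\<Sum>i\<le>Suc (indep_num V E). ?g i) = (\<Sum>i\<le>indep_num V E. ?g i)"
    using Ik_big[OF g, of "Suc (indep_num V E)"] by simp
  ultimately show ?thesis by (simp add: mult_ac)
qed

lemma main_ineq:
  assumes g: "graph V E" and that: "x \<ge> 0"
  shows "real (indep_num V E) * (\<Sum>k\<le>indep_num V E. real (Suc k) * real (card (Ik V E (Suc k))) * x ^ k)
    \<le> real (card V) * (real (indep_num V E) * (\<Sum>k\<le>indep_num V E. real (card (Ik V E k)) * x ^ k)
        - x * (\<Sum>k\<le>indep_num V E. real (card (Ik V E k)) * (real k * x ^ (k - Suc 0))))"
proof -
  let ?A = "indep_num V E"
  have "x * (\<Sum>k\<le>?A. real (card (Ik V E k)) * (real k * x ^ (k - Suc 0)))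
      = (\<Sum>k\<le>?A. real k * real (card (Ik V E k)) * x ^ k)"
    unfolding sum_distrib_left
  proof (rule sum.cong)
    fix k show "x * (real (card (Ik V E k)) * (real k * x ^ (k - Suc 0))) = real k * real (card (Ik V E k)) * x ^ k"
      by (cases k) auto
  qed simp
  then have "real (card V) * (real ?A * (\<Sum>k\<le>?A. real (card (Ik V E k)) * x ^ k)
        - x * (\<Sum>k\<le>?A. real (card (Ik V E k)) * (real k * x ^ (k - Suc 0))))
     = (\<Sum>k\<le>?A. real (card V) * (real ?A - real k) * real (card (Ik V E k)) * x ^ k)"
    by (simp add: sum_distrib_left sum_subtractf[symmetric] algebra_simps)
  moreover have "real ?A * (\<Sum>k\<le>?A. real (Suc k) * real (card (Ik V E (Suc k))) * x ^ k)
     = (\<Sum>k\<le>?A. real ?A * real (Suc k) * real (card (Ik V E (Suc k))) * x ^ k)"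
    by (simp add: sum_distrib_left mult_ac)
  moreover have "(\<Sum>k\<le>?A. real ?A * real (Suc k) * real (card (Ik V E (Suc k))) * x ^ k)
     \<le> (\<Sum>k\<le>?A. real (card V) * (real ?A - real k) * real (card (Ik V E k)) * x ^ k)"
    by (rule sum_mono) (use Tk[OF g] that in \<open>auto intro!: mult_right_mono simp del: of_nat_Suc\<close>)
  ultimately show ?thesis by simp
qed



lemma clique_facts:
  assumes g: "graph V E" and P: "partition_on V Pt" and cardB: "\<forall>B\<in>Pt. card B = r"
    and adj: "\<forall>x\<in>V. \<forall>y\<in>V. E x y \<longleftrightarrow> x \<noteq> y \<and> (\<exists>B\<in>Pt. x \<in> B \<and> y \<in> B)"
  shows "card V = r * indep_num V E"
    and "\<And>J. indep_set V E J \<Longrightarrow> card (Xs V E J) = card V - card J * r"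
proof -
  have fV: "finite V" using g by (simp add: graph_def)
  have UP: "\<Union>Pt = V" and dj: "disjoint Pt" and ne: "{} \<notin> Pt" using P by (auto simp: partition_on_def)
  have fPt: "finite Pt" using fV UP by (metis finite_UnionD)
  have fB: "B \<in> Pt \<Longrightarrow> finite B" for B using fV UP by (metis Union_upper finite_subset)
  have same: "B1 \<in> Pt \<Longrightarrow> B2 \<in> Pt \<Longrightarrow> x \<in> B1 \<Longrightarrow> x \<in> B2 \<Longrightarrow> B1 = B2" for B1 B2 x
    using dj by (auto simp: pairwise_def disjnt_def)
  have Eiff: "E x y \<longleftrightarrow> x \<in> V \<and> y \<in> V \<and> x \<noteq> y \<and> (\<exists>B\<in>Pt. x \<in> B \<and> y \<in> B)" for x y
  proof (cases "x \<in> V \<and> y \<in> V")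
    case True then show ?thesis using adj by simp
  next
    case False
    have "\<not> E x y" using False g unfolding graph_def by blast
    then show ?thesis using False by blast
  qed
  define f where "f u = (SOME B. B \<in> Pt \<and> u \<in> B)" for u
  have f: "u \<in> V \<Longrightarrow> f u \<in> Pt \<and> u \<in> f u" for u
    unfolding f_def using UP by (metis (mono_tags, lifting) UnionE someI_ex)
  have cV: "card V = r * card Pt"
  proof -
    have "card V = sum card Pt" using card_Union_disjoint[OF dj fB] UP by simp
    also have "\<dots> = sum (\<lambda>_. r) Pt" by (rule sum.cong[OF refl]) (use cardB in blast)
    also have "\<dots> = r * card Pt" by simp
    finally show ?thesis .
  qed
  have injJ: "indep_set V E J \<Longrightarrow> inj_on f J" for J
    unfolding inj_on_def indep_set_def using f Eiff by (metis subsetD)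
  have alpha: "indep_num V E = card Pt"
  proof (rule antisym)
    obtain J where J: "indep_set V E J" "card J = indep_num V E" using alpha_ex[OF g] by blast
    have "f ` J \<subseteq> Pt" using J f by (auto simp: indep_set_def)
    then have "card (f ` J) \<le> card Pt" using fPt by (rule card_mono[rotated])
    then show "indep_num V E \<le> card Pt" using card_image[OF injJ[OF J(1)]] J by simp
  next
    define h where "h B = (SOME x. x \<in> B)" for B :: "'a set"
    have h: "B \<in> Pt \<Longrightarrow> h B \<in> B" for B unfolding h_def using ne by (metis ex_in_conv someI_ex)
    have inj: "inj_on h Pt" unfolding inj_on_def using h same by metis
    have ind: "indep_set V E (h ` Pt)"
      unfolding indep_set_def
    proof (intro conjI ballI)
      show "h ` Pt \<subseteq> V" using h UP by blast
      fix x y assume "x \<in> h ` Pt" "y \<in> h ` Pt"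
      then obtain B1 B2 where "B1 \<in> Pt" "B2 \<in> Pt" "x = h B1" "y = h B2" by blast
      then show "\<not> E x y" using Eiff h same by metis
    qed
    have "card (h ` Pt) = card Pt" using card_image[OF inj] .
    then show "card Pt \<le> indep_num V E" using alpha_ge[OF g ind] by simp
  qed
  show "card V = r * indep_num V E" using cV alpha by simp
  fix J assume J: "indep_set V E J"
  have JV: "J \<subseteq> V" using J by (simp add: indep_set_def)
  let ?T = "{B\<in>Pt. B \<inter> J \<noteq> {}}"
  have Xeq: "Xs V E J = V - \<Union>?T"
  proof (intro equalityI subsetI)
    fix v assume v: "v \<in> Xs V E J"
    then have vV: "v \<in> V" "v \<notin> J" "\<forall>u\<in>J. \<not> E u v" by (auto simp: Xs_def)
    show "v \<in> V - \<Union>?T"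
    proof
      show "v \<in> V" using vV by simp
      show "v \<notin> \<Union>?T"
      proof
        assume "v \<in> \<Union>?T"
        then obtain B u where "B \<in> Pt" "v \<in> B" "u \<in> B" "u \<in> J" by blast
        then show False using vV JV Eiff by (metis subsetD)
      qed
    qed
  next
    fix v assume v: "v \<in> V - \<Union>?T"
    have "v \<notin> J" using v f JV by blast
    moreover have "\<forall>u\<in>J. \<not> E u v"
    proof
      fix u assume "u \<in> J"
      show "\<not> E u v"
      proof
        assume "E u v"
        then obtain B where "B \<in> Pt" "u \<in> B" "v \<in> B" using Eiff by blast
        then show False using v \<open>u \<in> J\<close> by blast
      qed
    qed
    ultimately show "v \<in> Xs V E J" using v by (auto simp: Xs_def)
  qed
  have fT: "f ` J = ?T"
  proof (intro equalityI subsetI)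
    fix B assume "B \<in> f ` J"
    then obtain u where "u \<in> J" "B = f u" by blast
    then show "B \<in> ?T" using f JV by blast
  next
    fix B assume B: "B \<in> ?T"
    then obtain u where u: "u \<in> B" "u \<in> J" by blast
    have uV: "u \<in> V" using JV u by blast
    have BP: "B \<in> Pt" using B by simp
    have "f u = B" using same[OF _ BP _ u(1)] f[OF uV] by blast
    then show "B \<in> f ` J" using u by blast
  qed
  have cT: "card ?T = card J" using card_image[OF injJ[OF J]] fT by simp
  have cU: "card (\<Union>?T) = card J * r"
  proof -
    have "card (\<Union>?T) = sum card ?T"
      using dj by (intro card_Union_disjoint) (auto simp: pairwise_def fB)
    also have "\<dots> = sum (\<lambda>_. r) ?T" by (rule sum.cong[OF refl]) (use cardB in blast)
    also have "\<dots> = card ?T * r" by simp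
    finally show ?thesis using cT by simp
  qed
  have "\<Union>?T \<subseteq> V" using UP by blast
  then have "card (V - \<Union>?T) = card V - card (\<Union>?T)"
    using fV by (intro card_Diff_subset) (auto intro: finite_subset)
  then show "card (Xs V E J) = card V - card J * r" using Xeq cU by simp
qed



lemma Tk_eq:
  assumes g: "graph V E" and P: "partition_on V Pt" and cardB: "\<forall>B\<in>Pt. card B = r"
    and adj: "\<forall>x\<in>V. \<forall>y\<in>V. E x y \<longleftrightarrow> x \<noteq> y \<and> (\<exists>B\<in>Pt. x \<in> B \<and> y \<in> B)"
    and k: "k \<le> indep_num V E"
  shows "real (indep_num V E) * real (Suc k) * real (card (Ik V E (Suc k)))
     = real (card V) * (real (indep_num V E) - real k) * real (card (Ik V E k))"
proof -
  note cf = clique_facts[OF g P cardB adj]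
  have "real (Suc k) * real (card (Ik V E (Suc k))) = (\<Sum>J\<in>Ik V E k. real (card (Xs V E J)))"
    using count1[OF g] .
  also have "\<dots> = (\<Sum>J\<in>Ik V E k. real (card V - k * r))"
    by (rule sum.cong[OF refl]) (auto simp: Ik_def cf(2))
  also have "\<dots> = real (card (Ik V E k)) * (real r * (real (indep_num V E) - real k))"
  proof -
    have "k * r \<le> card V" using cf(1) k by simp
    then have "real (card V - k * r) = real r * (real (indep_num V E) - real k)"
      using cf(1) by (simp add: of_nat_diff algebra_simps)
    then show ?thesis by simp
  qed
  finally have "real (Suc k) * real (card (Ik V E (Suc k))) = real (card (Ik V E k)) * (real r * (real (indep_num V E) - real k))" .
  then have "real (indep_num V E) * (real (Suc k) * real (card (Ik V E (Suc k))))
     = real (indep_num V E) * (real (card (Ik V E k)) * (real r * (real (indep_num V E) - real k)))" by simp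
  then show ?thesis using cf(1) by (simp add: algebra_simps)
qed



theorem theorem5p6:
  fixes V :: "'a set" and E :: "'a \<Rightarrow> 'a \<Rightarrow> bool" and lam :: real
  assumes "graph V E" and "V \<noteq> {}" and "lam > 0"
  shows "real (indep_num V E) / avg_indep V E lam \<ge> 1 + real (indep_num V E) / (lam * real (card V))
    \<and> ((\<exists>r::nat. r \<ge> 1 \<and> (\<exists>Pt. partition_on V Pt \<and> (\<forall>B\<in>Pt. card B = r) \<and>
            (\<forall>x\<in>V. \<forall>y\<in>V. E x y \<longleftrightarrow> x \<noteq> y \<and> (\<exists>B\<in>Pt. x \<in> B \<and> y \<in> B))))
         \<longrightarrow> real (indep_num V E) / avg_indep V E lam = 1 + real (indep_num V E) / (lam * real (card V)))"
proof -
  note g = assms(1)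
  define A where "A = indep_num V E"
  define c where "c k = real (card (Ik V E k))" for k
  define P where "P = (\<Sum>k\<le>A. c k * lam ^ k)"
  define D where "D = (\<Sum>k\<le>A. c k * (real k * lam ^ (k - Suc 0)))"
  define Ds where "Ds = (\<Sum>k\<le>A. real (Suc k) * c (Suc k) * lam ^ k)"
  have dv: "deriv (indep_poly V E) lam = D" unfolding D_def c_def A_def by (rule deriv_eq[OF g])
  have pv: "indep_poly V E lam = P" unfolding P_def c_def A_def poly_eq[OF g] by simp
  have avg: "avg_indep V E lam = lam * D / P" by (simp add: avg_indep_def dv pv)
  have DDs: "D = Ds" unfolding D_def Ds_def c_def A_def using deriv_shift[OF g] .
  have key: "real A * Ds \<le> real (card V) * (real A * P - lam * D)"
    unfolding D_def Ds_def c_def A_def P_def using main_ineq[OF g] assms(3) by simp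
  have A1: "A \<ge> 1" unfolding A_def using alpha_pos[OF g assms(2)] .
  have cA: "c A \<ge> 1"
  proof -
    obtain J where "indep_set V E J" "card J = A" using alpha_ex[OF g] A_def by blast
    then have "J \<in> Ik V E A" by (simp add: Ik_def)
    then have "card (Ik V E A) > 0" using fin_Ik[OF g] card_gt_0_iff by blast
    then show ?thesis by (simp add: c_def)
  qed
  have cnn: "c k \<ge> 0" for k by (simp add: c_def)
  have Ppos: "P > 0"
  proof -
    have "c A * lam ^ A \<le> P" unfolding P_def
      by (rule member_le_sum) (use cnn assms(3) in auto)
    moreover have "c A * lam ^ A > 0" using cA assms(3) by simp
    ultimately show ?thesis by linarith
  qed
  have Dpos: "D > 0"
  proof -
    have "c A * (real A * lam ^ (A - Suc 0)) \<le> D" unfolding D_def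
      by (rule member_le_sum) (use cnn assms(3) in auto)
    moreover have "c A * (real A * lam ^ (A - Suc 0)) > 0" using cA A1 assms(3) by simp
    ultimately show ?thesis by linarith
  qed
  have npos: "real (card V) > 0" using g assms(2) by (simp add: graph_def card_gt_0_iff)
  have lam: "lam > 0" by fact
  have diff: "real A / (lam * D / P) - (1 + real A / (lam * real (card V)))
      = (real (card V) * (real A * P - lam * D) - real A * D) / (lam * D * real (card V))"
    using Ppos Dpos npos lam by (simp add: field_simps)
  have den: "lam * D * real (card V) > 0" using Dpos npos lam by simp
  have conv: "real A / (lam * D / P) \<ge> 1 + real A / (lam * real (card V))"
    if "real A * D \<le> real (card V) * (real A * P - lam * D)"
  proof -
    have "0 \<le> (real (card V) * (real A * P - lam * D) - real A * D) / (lam * D * real (card V))"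
      using that den by simp
    then show ?thesis using diff by linarith
  qed
  have conv2: "real A / (lam * D / P) = 1 + real A / (lam * real (card V))"
    if "real A * D = real (card V) * (real A * P - lam * D)"
  proof -
    have "(real (card V) * (real A * P - lam * D) - real A * D) / (lam * D * real (card V)) = 0"
      using that by simp
    then show ?thesis using diff by linarith
  qed
  show ?thesis
  proof
    show "real (indep_num V E) / avg_indep V E lam \<ge> 1 + real (indep_num V E) / (lam * real (card V))"
      unfolding avg A_def[symmetric] by (rule conv) (use key DDs in simp)
  next
    show "(\<exists>r::nat. r \<ge> 1 \<and> (\<exists>Pt. partition_on V Pt \<and> (\<forall>B\<in>Pt. card B = r) \<and>
            (\<forall>x\<in>V. \<forall>y\<in>V. E x y \<longleftrightarrow> x \<noteq> y \<and> (\<exists>B\<in>Pt. x \<in> B \<and> y \<in> B))))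
         \<longrightarrow> real (indep_num V E) / avg_indep V E lam = 1 + real (indep_num V E) / (lam * real (card V))"
    proof
      assume "\<exists>r::nat. r \<ge> 1 \<and> (\<exists>Pt. partition_on V Pt \<and> (\<forall>B\<in>Pt. card B = r) \<and>
            (\<forall>x\<in>V. \<forall>y\<in>V. E x y \<longleftrightarrow> x \<noteq> y \<and> (\<exists>B\<in>Pt. x \<in> B \<and> y \<in> B)))"
      then obtain r Pt where Pt: "partition_on V Pt" "\<forall>B\<in>Pt. card B = r"
        "\<forall>x\<in>V. \<forall>y\<in>V. E x y \<longleftrightarrow> x \<noteq> y \<and> (\<exists>B\<in>Pt. x \<in> B \<and> y \<in> B)" by (elim exE conjE) (rule that; assumption)
      have lD: "lam * D = (\<Sum>k\<le>A. real k * c k * lam ^ k)"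
        unfolding D_def sum_distrib_left
      proof (rule sum.cong[OF refl])
        fix k show "lam * (c k * (real k * lam ^ (k - Suc 0))) = real k * c k * lam ^ k"
          by (cases k) auto
      qed
      have "real (card V) * (real A * P - lam * D) = (\<Sum>k\<le>A. real (card V) * real A * c k * lam ^ k) - (\<Sum>k\<le>A. real (card V) * (real k * c k * lam ^ k))"
        unfolding P_def lD by (simp add: sum_distrib_left right_diff_distrib mult_ac)
      also have "\<dots> = (\<Sum>k\<le>A. real (card V) * real A * c k * lam ^ k - real (card V) * (real k * c k * lam ^ k))"
        by (simp add: sum_subtractf)
      also have "\<dots> = (\<Sum>k\<le>A. real (card V) * (real A - real k) * c k * lam ^ k)"
        by (rule sum.cong[OF refl]) (simp add: algebra_simps)
      also have "\<dots> = (\<Sum>k\<le>A. real A * real (Suc k) * c (Suc k) * lam ^ k)"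
        by (rule sum.cong[OF refl]) (use Tk_eq[OF g Pt] in \<open>auto simp: c_def A_def simp del: of_nat_Suc\<close>)
      also have "\<dots> = real A * Ds" unfolding Ds_def by (simp add: sum_distrib_left mult_ac)
      finally have fin: "real (card V) * (real A * P - lam * D) = real A * Ds" .
      show "real (indep_num V E) / avg_indep V E lam = 1 + real (indep_num V E) / (lam * real (card V))"
        unfolding avg A_def[symmetric] by (rule conv2) (use fin DDs in simp)
    qed
  qed
qed


end
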